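(* Assume the standing hypotheses and definitions in the context. Then $H(t,G(t,y))=y$ for all $t\in\mathbb{R}$ and $y\in\mathbb{R}^n$.
   Context: Standing hypotheses: $A:\mathbb{R}\to\mathbb{R}^{n\times n}$ is continuous and bounded, $T(t,s)$ is the evolution operator of $x'=A(t)x$. $\mu:\mathbb{R}\to(0,\infty)$ is an increasing differentiable growth rate: $\mu(0)=1$, $\lim_{t\to-\infty}\mu(t)=0$, $\lim_{t\to+\infty}\mu(t)=+\infty$. The system $x'=A(t)x$ admits an algebraic dichotomy: projections $P(s)$, $Q(s)=I-P(s)$, constants $K,\alpha>0$ with $T(t,s)P(s)=P(t)T(t,s)$, $\|T(t,s)P(s)\|\le K(\mu(t)/\mu(s))^{-\alpha}$ ($t\ge s$), $\|T(t,s)Q(s)\|\le K(\mu(s)/\mu(t))^{-\alpha}$ ($t\le s$). $f:\mathbb{R}\times\mathbb{R}^n\to\mathbb{R}^n$ is continuous, $\|f(t,x)\|\le\beta\mu'(t)\mu^{-1}(t)$, $\|f(t,x_1)-f(t,x_2)\|\le\gamma\mu'(t)\mu^{-1}(t)\|x_1-x_2\|$ for constants $\beta,\gamma\ge0$, and $6K\gamma\alpha^{-1}<1$. $X(t,\tau,\xi)$ (resp. $Y(t,\tau,\xi)$) is the solution of $x'=A(t)x+f(t,x)$ (resp. $x'=A(t)x$) with value $\xi$ at $t=\tau$. $h(t,(\tau,\xi))$ is the unique solution bounded on $\mathbb{R}$ of $Z'=A(t)Z-f(t,X(t,\tau,\xi))$, and $g(t,(\tau,\xi))$ the unique solution bounded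 on $\mathbb{R}$ of $Z'=A(t)Z+f(t,Y(t,\tau,\xi)+Z)$ (both exist and are unique under these hypotheses). Define $H(t,x)=x+h(t,(t,x))$ and $G(t,y)=y+g(t,(t,y))$. *)

theory Defs
  imports "HOL-Analysis.Analysis"
begin

definition opnorm :: "real^'n^'m \<Rightarrow> real" where
  "opnorm M = onorm (\<lambda>x. M *v x)"

definition hsol :: "(real \<Rightarrow> real^'n^'n) \<Rightarrow> (real \<Rightarrow> real^'n \<Rightarrow> real^'n)
    \<Rightarrow> (real \<Rightarrow> real \<Rightarrow> real^'n \<Rightarrow> real^'n) \<Rightarrow> real \<Rightarrow> (real \<times> (real^'n)) \<Rightarrow> real^'n" where
  "hsol A f X t p =
     (THE z. bounded (range z) \<and>
        (\<forall>s. (z has_vector_derivative (A s *v z s - f s (X s (fst p) (snd p)))) (at s))) t"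

definition gsol :: "(real \<Rightarrow> real^'n^'n) \<Rightarrow> (real \<Rightarrow> real^'n \<Rightarrow> real^'n)
    \<Rightarrow> (real \<Rightarrow> real \<Rightarrow> real^'n \<Rightarrow> real^'n) \<Rightarrow> real \<Rightarrow> (real \<times> (real^'n)) \<Rightarrow> real^'n" where
  "gsol A f Y t p =
     (THE z. bounded (range z) \<and>
        (\<forall>s. (z has_vector_derivative (A s *v z s + f s (Y s (fst p) (snd p) + z s))) (at s))) t"

definition Hmap :: "(real \<Rightarrow> real^'n^'n) \<Rightarrow> (real \<Rightarrow> real^'n \<Rightarrow> real^'n)
    \<Rightarrow> (real \<Rightarrow> real \<Rightarrow> real^'n \<Rightarrow> real^'n) \<Rightarrow> real \<Rightarrow> real^'n \<Rightarrow> real^'n" where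
  "Hmap A f X t x = x + hsol A f X t (t, x)"

definition Gmap :: "(real \<Rightarrow> real^'n^'n) \<Rightarrow> (real \<Rightarrow> real^'n \<Rightarrow> real^'n)
    \<Rightarrow> (real \<Rightarrow> real \<Rightarrow> real^'n \<Rightarrow> real^'n) \<Rightarrow> real \<Rightarrow> real^'n \<Rightarrow> real^'n" where
  "Gmap A f Y t y = y + gsol A f Y t (t, y)"

end

theory Submission
  imports Defs
begin


lemma ivp_unique:
  fixes u v :: "real \<Rightarrow> 'a::real_inner" and \<mu> :: "real \<Rightarrow> real"
  assumes du: "\<And>s. (u has_vector_derivative u' s) (at s)"
    and dv: "\<And>s. (v has_vector_derivative v' s) (at s)"
    and bd: "\<And>s. norm (u' s - v' s) \<le> (M + c * deriv \<mu> s / \<mu> s) * norm (u s - v s)"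
    and mpos: "\<And>s. \<mu> s > 0"
    and dmu: "\<And>s. (\<mu> has_real_derivative deriv \<mu> s) (at s)"
    and dmu_nn: "\<And>s. deriv \<mu> s \<ge> 0"
    and c: "c \<ge> 0" and M: "M \<ge> 0"
    and tz: "u tz = v tz"
  shows "u s = v s"
proof -
  define d where "d = (\<lambda>s. u s - v s)"
  define d' where "d' = (\<lambda>s. u' s - v' s)"
  define L where "L = (\<lambda>s. 2 * M + 2 * c * deriv \<mu> s / \<mu> s)"
  have dd: "(d has_vector_derivative d' s) (at s)" for s
    unfolding d_def d'_def by (intro derivative_intros du dv)
  define \<phi> where "\<phi> = (\<lambda>s. d s \<bullet> d s)"
  have dphi: "(\<phi> has_real_derivative (2 * (d s \<bullet> d' s))) (at s)" for s
  proof -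
    have "(\<phi> has_vector_derivative (d s \<bullet> d' s + d' s \<bullet> d s)) (at s)"
      unfolding \<phi>_def by (rule bounded_bilinear.has_vector_derivative[OF bounded_bilinear_inner dd dd])
    then show ?thesis
      by (simp add: has_real_derivative_iff_has_vector_derivative inner_commute)
  qed
  have phi_nn: "\<phi> s \<ge> 0" for s unfolding \<phi>_def by simp
  have L_nn: "L s \<ge> 0" for s unfolding L_def using mpos[of s] dmu_nn[of s] c M by auto
  have phi_bd: "\<bar>2 * (d s \<bullet> d' s)\<bar> \<le> L s * \<phi> s" for s
  proof -
    have "\<bar>2 * (d s \<bullet> d' s)\<bar> \<le> 2 * (norm (d s) * norm (d' s))"
      using Cauchy_Schwarz_ineq2[of "d s" "d' s"] by simp
    also have "\<dots> \<le> 2 * (norm (d s) * ((M + c * deriv \<mu> s / \<mu> s) * norm (d s)))"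
      using bd[of s] unfolding d_def d'_def by (intro mult_left_mono) auto
    also have "\<dots> = L s * \<phi> s" unfolding L_def \<phi>_def
      by (simp add: power2_norm_eq_inner[symmetric] power2_eq_square algebra_simps)
    finally show ?thesis .
  qed
  have dln: "((\<lambda>s. ln (\<mu> s)) has_real_derivative deriv \<mu> s / \<mu> s) (at s)" for s
    using DERIV_ln_divide[OF mpos[of s]] dmu[of s]
    using mpos[of s] by (auto intro!: derivative_eq_intros simp: field_simps)
  have "\<phi> s = 0"
  proof (cases "tz \<le> s")
    case True
    define E where "E = (\<lambda>s. exp (- (2 * M * s + 2 * c * ln (\<mu> s))))"
    have dg: "((\<lambda>s. - (2 * M * s + 2 * c * ln (\<mu> s))) has_real_derivative (- L x)) (at x)" for x
      unfolding L_def using dln[of x] mpos[of x] dmu[of x]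
      by (auto intro!: derivative_eq_intros)
    have dE: "(E has_real_derivative E x * (- L x)) (at x)" for x
      unfolding E_def using DERIV_exp[THEN DERIV_chain2, OF dg[of x]] by (simp add: mult.commute)
    have "(\<lambda>s. \<phi> s * E s) s \<le> (\<lambda>s. \<phi> s * E s) tz"
    proof (rule DERIV_nonpos_imp_nonincreasing[OF True])
      fix x
      show "\<exists>y. ((\<lambda>s. \<phi> s * E s) has_real_derivative y) (at x) \<and> y \<le> 0"
      proof (intro exI conjI)
        show "((\<lambda>s. \<phi> s * E s) has_real_derivative (2 * (d x \<bullet> d' x)) * E x + \<phi> x * (E x * (- L x))) (at x)"
          using DERIV_mult[OF dphi dE] by (simp add: algebra_simps)
        have "E x > 0" unfolding E_def by simp
        moreover have "2 * (d x \<bullet> d' x) - L x * \<phi> x \<le> 0" using phi_bd[of x] by linarith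
        ultimately have "E x * (2 * (d x \<bullet> d' x) - L x * \<phi> x) \<le> 0"
          by (simp add: mult_nonneg_nonpos)
        then show "(2 * (d x \<bullet> d' x)) * E x + \<phi> x * (E x * (- L x)) \<le> 0"
          by (simp add: algebra_simps)
      qed
    qed
    moreover have "\<phi> tz = 0" using tz unfolding \<phi>_def d_def by simp
    moreover have "E s > 0" unfolding E_def by simp
    ultimately show ?thesis using phi_nn[of s]
      by (smt (verit) mult_le_0_iff mult_pos_pos)
  next
    case False
    then have sle: "s \<le> tz" by simp
    define E where "E = (\<lambda>s. exp (2 * M * s + 2 * c * ln (\<mu> s)))"
    have dg: "((\<lambda>s. 2 * M * s + 2 * c * ln (\<mu> s)) has_real_derivative L x) (at x)" for x
      unfolding L_def using dln[of x] mpos[of x] dmu[of x]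
      by (auto intro!: derivative_eq_intros)
    have dE: "(E has_real_derivative E x * L x) (at x)" for x
      unfolding E_def using DERIV_exp[THEN DERIV_chain2, OF dg[of x]] by (simp add: mult.commute)
    have "(\<lambda>s. \<phi> s * E s) s \<le> (\<lambda>s. \<phi> s * E s) tz"
    proof (rule DERIV_nonneg_imp_nondecreasing[OF sle])
      fix x
      show "\<exists>y. ((\<lambda>s. \<phi> s * E s) has_real_derivative y) (at x) \<and> y \<ge> 0"
      proof (intro exI conjI)
        show "((\<lambda>s. \<phi> s * E s) has_real_derivative (2 * (d x \<bullet> d' x)) * E x + \<phi> x * (E x * L x)) (at x)"
          using DERIV_mult[OF dphi dE] by (simp add: algebra_simps)
        have "E x > 0" unfolding E_def by simp
        moreover have "2 * (d x \<bullet> d' x) + L x * \<phi> x \<ge> 0" using phi_bd[of x] by linarith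
        ultimately have "E x * (2 * (d x \<bullet> d' x) + L x * \<phi> x) \<ge> 0"
          by simp
        then show "(2 * (d x \<bullet> d' x)) * E x + \<phi> x * (E x * L x) \<ge> 0"
          by (simp add: algebra_simps)
      qed
    qed
    moreover have "\<phi> tz = 0" using tz unfolding \<phi>_def d_def by simp
    moreover have "E s > 0" unfolding E_def by simp
    ultimately show ?thesis using phi_nn[of s]
      by (smt (verit) mult_le_0_iff mult_pos_pos)
  qed
  then show ?thesis unfolding \<phi>_def d_def by simp
qed




lemma entry_le_norm: "\<bar>(M::real^'n^'m) $ i $ j\<bar> \<le> norm M"
  using component_le_norm_cart[of "M $ i" j] Finite_Cartesian_Product.norm_nth_le[of M i] by linarith

lemma norm_le_sum_vec: "norm (x::'a::real_normed_vector^'n) \<le> (\<Sum>i\<in>UNIV. norm (x $ i))"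
  unfolding norm_vec_def by (rule L2_set_le_sum) simp

lemma mv_bound: "norm ((M::real^'n^'m) *v v) \<le> norm M * norm v * (real CARD('m) * real CARD('n))"
proof -
  have "onorm ((*v) M) \<le> real CARD('m) * real CARD('n) * norm M"
    by (rule onorm_le_matrix_component) (rule entry_le_norm)
  then have "norm (M *v v) \<le> (real CARD('m) * real CARD('n) * norm M) * norm v"
    using onorm[OF matrix_vector_mul_bounded_linear[of M], of v]
    by (meson mult_right_mono norm_ge_zero order_trans)
  then show ?thesis by (simp add: algebra_simps)
qed

lemma bb_mv: "bounded_bilinear (\<lambda>(M::real^'n^'m) v. M *v v)"
proof (rule bounded_bilinear.intro)
  show "\<exists>K. \<forall>a b. norm ((a::real^'n^'m) *v b) \<le> norm a * norm b * K"
    using mv_bound by blast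
qed (auto simp: algebra_simps matrix_vector_mult_scaleR vec_eq_iff matrix_vector_mult_def sum_distrib_left sum.distrib)

lemma bb_mm: "bounded_bilinear (\<lambda>(M::real^'n^'m) (N::real^'k^'n). M ** N)"
proof (rule bounded_bilinear.intro)
  show "\<exists>K. \<forall>(a::real^'n^'m) (b::real^'k^'n). norm (a ** b) \<le> norm a * norm b * K"
  proof (intro exI allI)
    fix a :: "real^'n^'m" and b :: "real^'k^'n"
    have c: "\<bar>(a ** b) $ i $ j\<bar> \<le> norm a * norm b * real CARD('n)" for i j
    proof -
      have "\<bar>(a ** b) $ i $ j\<bar> = \<bar>\<Sum>k\<in>UNIV. a $ i $ k * b $ k $ j\<bar>"
        by (simp add: matrix_matrix_mult_def)
      also have "\<dots> \<le> (\<Sum>k\<in>UNIV. \<bar>a $ i $ k\<bar> * \<bar>b $ k $ j\<bar>)"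
        by (rule order_trans[OF sum_abs]) (simp add: abs_mult)
      also have "\<dots> \<le> (\<Sum>k\<in>(UNIV::'n set). norm a * norm b)"
        by (intro sum_mono mult_mono) (auto simp: entry_le_norm)
      finally show ?thesis by (simp add: mult.commute)
    qed
    have "norm (a ** b) \<le> (\<Sum>i\<in>UNIV. norm ((a ** b) $ i))"
      by (rule norm_le_sum_vec)
    also have "\<dots> \<le> (\<Sum>i\<in>(UNIV::'m set). \<Sum>j\<in>(UNIV::'k set). \<bar>(a ** b) $ i $ j\<bar>)"
      by (intro sum_mono norm_le_l1_cart[THEN order_trans]) (simp add: real_norm_def)
    also have "\<dots> \<le> (\<Sum>i\<in>(UNIV::'m set). \<Sum>j\<in>(UNIV::'k set). norm a * norm b * real CARD('n))"
      by (intro sum_mono c)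
    also have "\<dots> = norm a * norm b * (real CARD('n) * real CARD('m) * real CARD('k))"
      by (simp add: algebra_simps)
    finally show "norm (a ** b) \<le> norm a * norm b * (real CARD('n) * real CARD('m) * real CARD('k))" .
  qed
qed (auto simp: algebra_simps matrix_add_ldistrib scalar_matrix_assoc matrix_scalar_ac vec_eq_iff matrix_matrix_mult_def sum.distrib sum_distrib_left)

lemma mm_diff_right: "(M::real^'n^'m) ** ((B::real^'k^'n) - C) = M ** B - M ** C"
  using bounded_bilinear.diff_right[OF bb_mm] by blast

lemma mm_diff_left: "((M::real^'n^'m) - N) ** (B::real^'k^'n) = M ** B - N ** B"
  using bounded_bilinear.diff_left[OF bb_mm] by blast




locale setting =
  fixes A :: "real \<Rightarrow> real^'n^'n"
    and T :: "real \<Rightarrow> real \<Rightarrow> real^'n^'n"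
    and \<mu> :: "real \<Rightarrow> real"
    and P :: "real \<Rightarrow> real^'n^'n"
    and K \<alpha> \<beta> \<gamma> :: real
    and f :: "real \<Rightarrow> real^'n \<Rightarrow> real^'n"
    and X Y :: "real \<Rightarrow> real \<Rightarrow> real^'n \<Rightarrow> real^'n"
  assumes A_cont: "continuous_on UNIV A"
    and A_bdd: "bounded (range A)"
    and T_init: "\<And>s. T s s = mat 1"
    and T_deriv: "\<And>t s. ((\<lambda>r. T r s) has_vector_derivative (A t ** T t s)) (at t)"
    and mu_pos: "\<And>t. \<mu> t > 0"
    and mu_incr: "strict_mono \<mu>"
    and mu_diff: "\<And>t. \<mu> differentiable (at t)"
    and mu_0: "\<mu> 0 = 1"
    and mu_bot: "(\<mu> \<longlongrightarrow> 0) at_bot"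
    and mu_top: "filterlim \<mu> at_top at_top"
    and P_proj: "\<And>s. P s ** P s = P s"
    and K_pos: "K > 0" and alpha_pos: "\<alpha> > 0"
    and dich_comm: "\<And>t s. T t s ** P s = P t ** T t s"
    and dich_P: "\<And>t s. t \<ge> s \<Longrightarrow> opnorm (T t s ** P s) \<le> K * (\<mu> t / \<mu> s) powr (-\<alpha>)"
    and dich_Q: "\<And>t s. t \<le> s \<Longrightarrow> opnorm (T t s ** (mat 1 - P s)) \<le> K * (\<mu> s / \<mu> t) powr (-\<alpha>)"
    and f_cont: "continuous_on UNIV (\<lambda>(t, x). f t x)"
    and f_bdd: "\<And>t x. norm (f t x) \<le> \<beta> * deriv \<mu> t / \<mu> t"
    and f_lip: "\<And>t x1 x2. norm (f t x1 - f t x2) \<le> \<gamma> * deriv \<mu> t / \<mu> t * norm (x1 - x2)"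
    and beta_nn: "\<beta> \<ge> 0" and gamma_nn: "\<gamma> \<ge> 0"
    and small: "6 * K * \<gamma> / \<alpha> < 1"
    and X_init: "\<And>\<tau> \<xi>. X \<tau> \<tau> \<xi> = \<xi>"
    and X_sol: "\<And>t \<tau> \<xi>. ((\<lambda>r. X r \<tau> \<xi>) has_vector_derivative
                    (A t *v X t \<tau> \<xi> + f t (X t \<tau> \<xi>))) (at t)"
    and Y_init: "\<And>\<tau> \<xi>. Y \<tau> \<tau> \<xi> = \<xi>"
    and Y_sol: "\<And>t \<tau> \<xi>. ((\<lambda>r. Y r \<tau> \<xi>) has_vector_derivative (A t *v Y t \<tau> \<xi>)) (at t)"
begin

lemma dmu: "(\<mu> has_real_derivative deriv \<mu> s) (at s)"
  using mu_diff DERIV_deriv_iff_real_differentiable by blast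

lemma dmu_nn: "deriv \<mu> s \<ge> 0"
proof (rule mono_on_imp_deriv_nonneg[OF _ dmu])
  show "mono_on UNIV \<mu>" using mu_incr by (simp add: strict_mono_mono)
qed simp

lemma A_vbound: obtains MA where "MA \<ge> 0" "\<And>s x. norm (A s *v x) \<le> MA * norm x"
proof -
  obtain B where B: "\<And>s. norm (A s) \<le> B" using A_bdd by (auto simp: bounded_iff)
  have "norm (A s *v x) \<le> (max B 0 * (real CARD('n) * real CARD('n))) * norm x" for s x
  proof -
    have "norm (A s *v x) \<le> norm (A s) * norm x * (real CARD('n) * real CARD('n))"
      by (rule mv_bound)
    also have "\<dots> \<le> max B 0 * norm x * (real CARD('n) * real CARD('n))"
      using B[of s] by (intro mult_right_mono) (auto intro: mult_right_mono)
    finally show ?thesis by (simp add: algebra_simps)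
  qed
  then show ?thesis using that[of "max B 0 * (real CARD('n) * real CARD('n))"] by simp
qed

lemma dTv: "((\<lambda>s. T s r *v w) has_vector_derivative A s *v (T s r *v w)) (at s)"
  using bounded_bilinear.has_vector_derivative[OF bb_mv T_deriv[of r s] has_vector_derivative_const[of w]]
  by (simp add: matrix_vector_mul_assoc)

lemma hom_rep:
  assumes dx: "\<And>s. (x has_vector_derivative A s *v x s) (at s)"
  shows "x s = T s r *v x r"
proof -
  obtain MA where MA: "MA \<ge> 0" "\<And>s v. norm (A s *v v) \<le> MA * norm v" using A_vbound by blast
  show ?thesis
  proof (rule ivp_unique[where u=x and v="\<lambda>s. T s r *v x r" and u'="\<lambda>s. A s *v x s" and v'="\<lambda>s. A s *v (T s r *v x r)" and M=MA and c=0
        and \<mu>=\<mu> and tz=r])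
    show "(x has_vector_derivative A s *v x s) (at s)" for s by (rule dx)
    show "((\<lambda>s. T s r *v x r) has_vector_derivative A s *v (T s r *v x r)) (at s)" for s by (rule dTv)
    show "norm (A s *v x s - A s *v (T s r *v x r)) \<le> (MA + 0 * deriv \<mu> s / \<mu> s) * norm (x s - T s r *v x r)" for s
      using MA(2)[of s "x s - T s r *v x r"] by (simp add: matrix_vector_mult_diff_distrib)
  qed (auto simp: mu_pos dmu dmu_nn MA T_init)
qed

lemma cocycle: "T s r ** T r u = T s u"
proof -
  have "T s u *v w = T s r *v (T r u *v w)" for w
    using hom_rep[of "\<lambda>s. T s u *v w" s r] dTv by blast
  then show ?thesis by (simp add: matrix_eq matrix_vector_mul_assoc)
qed

lemma T_inv: "T s r ** T r s = mat 1"
  using cocycle[of s r s] T_init by simp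

lemma T_cont1: "continuous_on UNIV (\<lambda>t. T t r)"
  using T_deriv has_vector_derivative_continuous continuous_at_imp_continuous_on by blast

lemma T_tendsto_id: "((\<lambda>r. T r0 r) \<longlongrightarrow> mat 1) (at r0)"
proof -
  obtain Kb where Kb: "Kb > 0" "\<And>a b. norm ((a::real^'n^'n) ** (b::real^'n^'n)) \<le> norm a * norm b * Kb"
    using bounded_bilinear.pos_bounded[OF bb_mm] by blast
  define E where "E = (\<lambda>r. T r r0 - mat 1)"
  have E0: "(E \<longlongrightarrow> 0) (at r0)"
  proof -
    have "((\<lambda>r. T r r0) \<longlongrightarrow> T r0 r0) (at r0)"
      using T_cont1[of r0] by (simp add: continuous_on_def)
    then show ?thesis unfolding E_def using T_init[of r0] by (simp add: LIM_zero)
  qed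
  have ev: "eventually (\<lambda>r. norm (E r) * Kb \<le> 1/2) (at r0)"
  proof -
    have "eventually (\<lambda>r. norm (E r) < 1/(2*Kb)) (at r0)"
      using E0 Kb(1) by (simp add: tendsto_iff dist_norm)
    then show ?thesis
      by eventually_elim (use Kb(1) in \<open>auto simp: field_simps\<close>)
  qed
  have key: "norm (T r0 r - mat 1) \<le> (2 * norm (mat 1 :: real^'n^'n) * Kb) * norm (E r)"
    if h: "norm (E r) * Kb \<le> 1/2" for r
  proof -
    let ?N = "T r0 r"
    have NE: "?N - mat 1 = - (?N ** E r)"
      unfolding E_def using T_inv[of r0 r] by (simp add: mm_diff_right algebra_simps)
    have nE: "norm (?N ** E r) \<le> norm ?N * (norm (E r) * Kb)"
      using Kb(2)[of ?N "E r"] by (simp add: algebra_simps)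
    have "norm ?N \<le> norm (mat 1 :: real^'n^'n) + norm (?N - mat 1)"
      by (metis add.commute diff_add_cancel norm_triangle_ineq)
    also have "\<dots> \<le> norm (mat 1 :: real^'n^'n) + norm ?N * (norm (E r) * Kb)"
      using NE nE by simp
    also have "\<dots> \<le> norm (mat 1 :: real^'n^'n) + norm ?N * (1/2)"
      by (intro add_left_mono mult_left_mono h) simp
    finally have bN: "norm ?N \<le> 2 * norm (mat 1 :: real^'n^'n)" by simp
    have "norm (?N - mat 1) \<le> norm ?N * norm (E r) * Kb"
      using NE nE by (simp only: norm_minus_cancel)
    also have "\<dots> \<le> (2 * norm (mat 1 :: real^'n^'n)) * norm (E r) * Kb"
      using bN Kb(1) by (intro mult_right_mono) auto
    finally show ?thesis by (simp add: algebra_simps)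
  qed
  have "((\<lambda>r. T r0 r - mat 1) \<longlongrightarrow> 0) (at r0)"
  proof (rule Lim_null_comparison)
    show "eventually (\<lambda>r. norm (T r0 r - mat 1) \<le> (2 * norm (mat 1 :: real^'n^'n) * Kb) * norm (E r)) (at r0)"
      using ev by eventually_elim (rule key)
    show "((\<lambda>r. (2 * norm (mat 1 :: real^'n^'n) * Kb) * norm (E r)) \<longlongrightarrow> 0) (at r0)"
      using tendsto_mult_right_zero[OF tendsto_norm_zero[OF E0]] by simp
  qed
  then show ?thesis by (simp add: LIM_zero_iff)
qed

lemma T_cont2: "continuous_on UNIV (\<lambda>r. T s r)"
proof -
  have "isCont (\<lambda>r. T s r) r0" for r0
  proof -
    have "((\<lambda>r. T s r0 ** T r0 r) \<longlongrightarrow> T s r0 ** mat 1) (at r0)"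
      by (rule bounded_bilinear.tendsto[OF bb_mm tendsto_const T_tendsto_id])
    then show ?thesis by (simp add: cocycle isCont_def)
  qed
  then show ?thesis by (simp add: continuous_at_imp_continuous_on)
qed

end



lemma le_lim_zero:
  fixes v :: "'a::real_normed_vector"
  assumes "F \<noteq> bot" "(h \<longlongrightarrow> 0) F" "eventually (\<lambda>r. norm v \<le> h r) F"
  shows "v = 0"
proof -
  have "norm v \<le> 0"
    using tendsto_le[OF assms(1) assms(2) tendsto_const assms(3)] .
  then show ?thesis by simp
qed

lemma opnorm_mv: "norm (M *v v) \<le> opnorm M * norm v"
  unfolding opnorm_def by (rule onorm[OF matrix_vector_mul_bounded_linear])

context setting begin

lemma mu_ratio_bot: "((\<lambda>r. (\<mu> t / \<mu> r) powr (-\<alpha>)) \<longlongrightarrow> 0) at_bot"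
proof (rule tendsto_neg_powr)
  show "-\<alpha> < 0" using alpha_pos by simp
  have "filterlim \<mu> (at_right 0) at_bot"
    using mu_bot mu_pos by (auto simp: filterlim_at intro!: always_eventually) (metis less_irrefl mu_pos)
  then have "filterlim (\<lambda>r. inverse (\<mu> r)) at_top at_bot"
    using filterlim_compose[OF filterlim_inverse_at_top_right] by blast
  then have "filterlim (\<lambda>r. \<mu> t * inverse (\<mu> r)) at_top at_bot"
    by (rule filterlim_tendsto_pos_mult_at_top[OF tendsto_const mu_pos])
  then show "filterlim (\<lambda>r. \<mu> t / \<mu> r) at_top at_bot"
    by (simp add: divide_inverse)
qed

lemma mu_ratio_top: "((\<lambda>r. (\<mu> r / \<mu> t) powr (-\<alpha>)) \<longlongrightarrow> 0) at_top"
proof (rule tendsto_neg_powr)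
  show "-\<alpha> < 0" using alpha_pos by simp
  have "filterlim (\<lambda>r. inverse (\<mu> t) * \<mu> r) at_top at_top"
    by (rule filterlim_tendsto_pos_mult_at_top[OF tendsto_const _ mu_top]) (simp add: mu_pos)
  then show "filterlim (\<lambda>r. \<mu> r / \<mu> t) at_top at_top"
    by (simp add: divide_inverse mult.commute)
qed

lemma hom_bdd_zero:
  assumes dx: "\<And>s. (x has_vector_derivative A s *v x s) (at s)"
    and bx: "bounded (range x)"
  shows "x t = 0"
proof -
  obtain B where B: "\<And>s. norm (x s) \<le> B" using bx by (auto simp: bounded_iff)
  have rep: "x t = T t r *v x r" for r by (rule hom_rep[OF dx])
  have p1: "P t *v x t = (T t r ** P r) *v x r" for r
    using rep[of r] by (simp add: matrix_vector_mul_assoc dich_comm)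
  have p2: "(mat 1 - P t) *v x t = (T t r ** (mat 1 - P r)) *v x r" for r
    using rep[of r] by (simp add: matrix_vector_mul_assoc dich_comm mm_diff_right mm_diff_left)
  have "P t *v x t = 0"
  proof (rule le_lim_zero[where F=at_bot])
    show "((\<lambda>r. K * (\<mu> t / \<mu> r) powr (-\<alpha>) * B) \<longlongrightarrow> 0) at_bot"
      using tendsto_mult[OF tendsto_mult[OF tendsto_const mu_ratio_bot[of t]] tendsto_const, of K B]
      by simp
    have "norm (P t *v x t) \<le> K * (\<mu> t / \<mu> r) powr (-\<alpha>) * B" if "r \<le> t" for r
    proof -
      have "norm (P t *v x t) \<le> opnorm (T t r ** P r) * norm (x r)"
        unfolding p1[of r] by (rule opnorm_mv)
      also have "\<dots> \<le> K * (\<mu> t / \<mu> r) powr (-\<alpha>) * B"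
        using dich_P[OF that] B[of r] K_pos
        by (intro mult_mono) (auto intro: order_trans[OF norm_ge_zero opnorm_mv])
      finally show ?thesis .
    qed
    then show "eventually (\<lambda>r. norm (P t *v x t) \<le> K * (\<mu> t / \<mu> r) powr (-\<alpha>) * B) at_bot"
      unfolding eventually_at_bot_linorder by blast
  qed simp
  moreover have "(mat 1 - P t) *v x t = 0"
  proof (rule le_lim_zero[where F=at_top])
    show "((\<lambda>r. K * (\<mu> r / \<mu> t) powr (-\<alpha>) * B) \<longlongrightarrow> 0) at_top"
      using tendsto_mult[OF tendsto_mult[OF tendsto_const mu_ratio_top[of t]] tendsto_const, of K B]
      by simp
    have "norm ((mat 1 - P t) *v x t) \<le> K * (\<mu> r / \<mu> t) powr (-\<alpha>) * B" if "t \<le> r" for r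
    proof -
      have "norm ((mat 1 - P t) *v x t) \<le> opnorm (T t r ** (mat 1 - P r)) * norm (x r)"
        unfolding p2[of r] by (rule opnorm_mv)
      also have "\<dots> \<le> K * (\<mu> r / \<mu> t) powr (-\<alpha>) * B"
        using dich_Q[OF that] B[of r] K_pos
        by (intro mult_mono) (auto intro: order_trans[OF norm_ge_zero opnorm_mv])
      finally show ?thesis .
    qed
    then show "eventually (\<lambda>r. norm ((mat 1 - P t) *v x t) \<le> K * (\<mu> r / \<mu> t) powr (-\<alpha>) * B) at_top"
      unfolding eventually_at_top_linorder by blast
  qed simp
  ultimately show ?thesis by (simp add: matrix_vector_mult_diff_rdistrib)
qed

end



lemma improper_left:
  fixes G :: "real \<Rightarrow> real"
  assumes nn: "\<And>r. r \<le> s \<Longrightarrow> 0 \<le> G r"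
    and hi: "\<And>a. a \<le> s \<Longrightarrow> (G has_integral I a) {a..s}"
    and Ib: "\<And>a. a \<le> s \<Longrightarrow> I a \<le> B"
  shows "G integrable_on {..s} \<and> integral {..s} G \<le> B"
proof -
  define fk where "fk = (\<lambda>k::nat. \<lambda>r. if r \<in> {s - real k..s} then G r else 0)"
  have int: "(fk k has_integral I (s - real k)) {..s}" for k
  proof -
    have e: "{s - real k..s} \<inter> {..s} = {s - real k..s}" by auto
    show ?thesis unfolding fk_def has_integral_restrict_Int e using hi[of "s - real k"] by simp
  qed
  have fk_nn: "0 \<le> fk k x" if "x \<in> {..s}" for k x
    using nn that unfolding fk_def by auto
  have "G integrable_on {..s} \<and> ((\<lambda>k. integral {..s} (fk k)) \<longlongrightarrow> integral {..s} G) sequentially"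
  proof (rule monotone_convergence_increasing)
    show "fk k integrable_on {..s}" for k using int by blast
    show "fk k x \<le> fk (Suc k) x" if "x \<in> {..s}" for k x
      using nn that unfolding fk_def by auto
    show "((\<lambda>k. fk k x) \<longlongrightarrow> G x) sequentially" if "x \<in> {..s}" for x
    proof (rule tendsto_eventually)
      show "eventually (\<lambda>k. fk k x = G x) sequentially"
        unfolding eventually_sequentially
      proof (intro exI allI impI)
        fix k assume "nat \<lceil>s - x\<rceil> \<le> k"
        then have "s - x \<le> real k" by linarith
        then show "fk k x = G x" using that unfolding fk_def by auto
      qed
    qed
    have "\<bar>integral {..s} (fk k)\<bar> \<le> B" for k
    proof -
      have "integral {..s} (fk k) = I (s - real k)" using int by (rule integral_unique)
      moreover have "0 \<le> I (s - real k)" using int[of k] fk_nn by (rule has_integral_nonneg)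
      moreover have "I (s - real k) \<le> B" using Ib by simp
      ultimately show ?thesis by simp
    qed
    then show "bounded (range (\<lambda>k. integral {..s} (fk k)))"
      unfolding bounded_iff by auto
  qed
  moreover have "integral {..s} (fk k) \<le> B" for k
    using integral_unique[OF int[of k]] Ib[of "s - real k"] by simp
  ultimately show ?thesis
    using LIMSEQ_le_const2 by blast
qed

lemma improper_right:
  fixes G :: "real \<Rightarrow> real"
  assumes nn: "\<And>r. s \<le> r \<Longrightarrow> 0 \<le> G r"
    and hi: "\<And>b. s \<le> b \<Longrightarrow> (G has_integral I b) {s..b}"
    and Ib: "\<And>b. s \<le> b \<Longrightarrow> I b \<le> B"
  shows "G integrable_on {s..} \<and> integral {s..} G \<le> B"
proof -
  define fk where "fk = (\<lambda>k::nat. \<lambda>r. if r \<in> {s..s + real k} then G r else 0)"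
  have int: "(fk k has_integral I (s + real k)) {s..}" for k
  proof -
    have e: "{s..s + real k} \<inter> {s..} = {s..s + real k}" by auto
    show ?thesis unfolding fk_def has_integral_restrict_Int e using hi[of "s + real k"] by simp
  qed
  have fk_nn: "0 \<le> fk k x" if "x \<in> {s..}" for k x
    using nn that unfolding fk_def by auto
  have "G integrable_on {s..} \<and> ((\<lambda>k. integral {s..} (fk k)) \<longlongrightarrow> integral {s..} G) sequentially"
  proof (rule monotone_convergence_increasing)
    show "fk k integrable_on {s..}" for k using int by blast
    show "fk k x \<le> fk (Suc k) x" if "x \<in> {s..}" for k x
      using nn that unfolding fk_def by auto
    show "((\<lambda>k. fk k x) \<longlongrightarrow> G x) sequentially" if "x \<in> {s..}" for x
    proof (rule tendsto_eventually)
      show "eventually (\<lambda>k. fk k x = G x) sequentially"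
        unfolding eventually_sequentially
      proof (intro exI allI impI)
        fix k assume "nat \<lceil>x - s\<rceil> \<le> k"
        then have "x - s \<le> real k" by linarith
        then show "fk k x = G x" using that unfolding fk_def by auto
      qed
    qed
    have "\<bar>integral {s..} (fk k)\<bar> \<le> B" for k
    proof -
      have "integral {s..} (fk k) = I (s + real k)" using int by (rule integral_unique)
      moreover have "0 \<le> I (s + real k)" using int[of k] fk_nn by (rule has_integral_nonneg)
      moreover have "I (s + real k) \<le> B" using Ib by simp
      ultimately show ?thesis by simp
    qed
    then show "bounded (range (\<lambda>k. integral {s..} (fk k)))"
      unfolding bounded_iff by auto
  qed
  moreover have "integral {s..} (fk k) \<le> B" for k
    using integral_unique[OF int[of k]] Ib[of "s + real k"] by simp
  ultimately show ?thesis
    using LIMSEQ_le_const2 by blast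
qed




context setting begin

lemma P_eq: "P r = T r 0 ** P 0 ** T 0 r"
proof -
  have "P r = P r ** (T r 0 ** T 0 r)" by (simp add: T_inv)
  also have "\<dots> = T r 0 ** P 0 ** T 0 r"
    by (simp add: matrix_mul_assoc dich_comm[of r 0, symmetric])
  finally show ?thesis .
qed

lemma P_cont: "continuous_on UNIV P"
proof -
  have "continuous_on UNIV (\<lambda>r. T r 0 ** P 0 ** T 0 r)"
    by (intro bounded_bilinear.continuous_on[OF bb_mm] T_cont1 T_cont2 continuous_on_const)
  then show ?thesis by (subst (asm) P_eq[symmetric]) simp
qed

definition "Lam r = ln (\<mu> r)"

lemma dLam: "(Lam has_real_derivative deriv \<mu> r / \<mu> r) (at r)"
  unfolding Lam_def using DERIV_ln_divide[OF mu_pos[of r]] dmu[of r] mu_pos[of r]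
  by (auto intro!: derivative_eq_intros simp: field_simps)

lemma dLam_nn: "deriv \<mu> r / \<mu> r \<ge> 0"
  using dmu_nn[of r] mu_pos[of r] by simp

lemma ratio_exp: "(\<mu> t / \<mu> s) powr (-\<alpha>) = exp (\<alpha> * (Lam s - Lam t))"
  using mu_pos[of t] mu_pos[of s]
  by (simp add: powr_def Lam_def ln_div algebra_simps)

definition "G1 c s r = K * c * exp (\<alpha> * (Lam r - Lam s)) * (deriv \<mu> r / \<mu> r)"
definition "G2 c s r = K * c * exp (\<alpha> * (Lam s - Lam r)) * (deriv \<mu> r / \<mu> r)"

lemma G1_int:
  assumes c: "c \<ge> 0"
  shows "G1 c s integrable_on {..s} \<and> integral {..s} (G1 c s) \<le> K * c / \<alpha>"
proof (rule improper_left[where I="\<lambda>a. K * c / \<alpha> * exp (\<alpha> * (Lam s - Lam s)) - K * c / \<alpha> * exp (\<alpha> * (Lam a - Lam s))"])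
  show "0 \<le> G1 c s r" for r
    unfolding G1_def using K_pos c dLam_nn[of r] by (simp del: times_divide_eq_right)
  show "(G1 c s has_integral (K * c / \<alpha> * exp (\<alpha> * (Lam s - Lam s)) - K * c / \<alpha> * exp (\<alpha> * (Lam a - Lam s)))) {a..s}"
    if "a \<le> s" for a
  proof (rule fundamental_theorem_of_calculus[OF that])
    fix x
    have "((\<lambda>r. K * c / \<alpha> * exp (\<alpha> * (Lam r - Lam s))) has_real_derivative G1 c s x) (at x)"
      unfolding G1_def using dLam[of x] alpha_pos by (auto intro!: derivative_eq_intros simp: field_simps)
    then show "((\<lambda>r. K * c / \<alpha> * exp (\<alpha> * (Lam r - Lam s))) has_vector_derivative G1 c s x) (at x within {a..s})"
      by (simp add: has_real_derivative_iff_has_vector_derivative has_vector_derivative_at_within)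
  qed
  show "K * c / \<alpha> * exp (\<alpha> * (Lam s - Lam s)) - K * c / \<alpha> * exp (\<alpha> * (Lam a - Lam s)) \<le> K * c / \<alpha>" for a
    using K_pos c alpha_pos by simp
qed

lemma G2_int:
  assumes c: "c \<ge> 0"
  shows "G2 c s integrable_on {s..} \<and> integral {s..} (G2 c s) \<le> K * c / \<alpha>"
proof (rule improper_right[where I="\<lambda>b. K * c / \<alpha> * exp (\<alpha> * (Lam s - Lam s)) - K * c / \<alpha> * exp (\<alpha> * (Lam s - Lam b))"])
  show "0 \<le> G2 c s r" for r
    unfolding G2_def using K_pos c dLam_nn[of r] by (simp del: times_divide_eq_right)
  show "(G2 c s has_integral (K * c / \<alpha> * exp (\<alpha> * (Lam s - Lam s)) - K * c / \<alpha> * exp (\<alpha> * (Lam s - Lam b)))) {s..b}"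
    if "s \<le> b" for b
  proof -
    have "(G2 c s has_integral ((- K * c / \<alpha> * exp (\<alpha> * (Lam s - Lam b))) - (- K * c / \<alpha> * exp (\<alpha> * (Lam s - Lam s))))) {s..b}"
    proof (rule fundamental_theorem_of_calculus[OF that])
      fix x
      have "((\<lambda>r. - K * c / \<alpha> * exp (\<alpha> * (Lam s - Lam r))) has_real_derivative G2 c s x) (at x)"
        unfolding G2_def using dLam[of x] alpha_pos by (auto intro!: derivative_eq_intros simp: field_simps)
      then show "((\<lambda>r. - K * c / \<alpha> * exp (\<alpha> * (Lam s - Lam r))) has_vector_derivative G2 c s x) (at x within {s..b})"
        by (simp add: has_real_derivative_iff_has_vector_derivative has_vector_derivative_at_within)
    qed
    then show ?thesis by (simp add: algebra_simps)
  qed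
  show "K * c / \<alpha> * exp (\<alpha> * (Lam s - Lam s)) - K * c / \<alpha> * exp (\<alpha> * (Lam s - Lam b)) \<le> K * c / \<alpha>" for b
    using K_pos c alpha_pos by simp
qed

end



context setting begin

definition "Lop F s = integral {..s} (\<lambda>r. (T s r ** P r) *v F r)
                     - integral {s..} (\<lambda>r. (T s r ** (mat 1 - P r)) *v F r)"

lemma opnorm_nn: "opnorm M \<ge> 0"
  unfolding opnorm_def by (rule onorm_pos_le[OF matrix_vector_mul_bounded_linear])

context
  fixes F :: "real \<Rightarrow> real^'n" and c :: real
  assumes Fc: "continuous_on UNIV F"
    and Fb: "\<And>r. norm (F r) \<le> c * (deriv \<mu> r / \<mu> r)"
    and c_nn: "c \<ge> 0"
begin

lemma k1_cont: "continuous_on UNIV (\<lambda>r. (T s r ** P r) *v F r)"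
  by (intro bounded_bilinear.continuous_on[OF bb_mv] bounded_bilinear.continuous_on[OF bb_mm] T_cont2 P_cont Fc)

lemma mmP_cont: "continuous_on UNIV (\<lambda>r. mat 1 - P r)"
  by (intro continuous_intros P_cont)

lemma k2_cont: "continuous_on UNIV (\<lambda>r. (T s r ** (mat 1 - P r)) *v F r)"
  by (intro bounded_bilinear.continuous_on[OF bb_mv] bounded_bilinear.continuous_on[OF bb_mm] T_cont2 mmP_cont Fc)

lemma k1_int_bound:
  "(\<lambda>r. (T s r ** P r) *v F r) integrable_on {..s} \<and> norm (integral {..s} (\<lambda>r. (T s r ** P r) *v F r)) \<le> K * c / \<alpha>"
proof -
  have dom: "norm ((T s r ** P r) *v F r) \<le> G1 c s r" if "r \<in> {..s}" for r
  proof -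
    have "norm ((T s r ** P r) *v F r) \<le> opnorm (T s r ** P r) * norm (F r)" by (rule opnorm_mv)
    also have "\<dots> \<le> (K * (\<mu> s / \<mu> r) powr (-\<alpha>)) * (c * (deriv \<mu> r / \<mu> r))"
      using dich_P[of r s] that Fb[of r] using K_pos by (intro mult_mono opnorm_nn) auto
    also have "\<dots> = G1 c s r" unfolding G1_def ratio_exp by simp
    finally show ?thesis .
  qed
  have meas: "(\<lambda>r. (T s r ** P r) *v F r) \<in> borel_measurable (lebesgue_on {..s})"
    by (rule continuous_imp_measurable_on_sets_lebesgue[OF continuous_on_subset[OF k1_cont]]) auto
  have G: "G1 c s integrable_on {..s}" "integral {..s} (G1 c s) \<le> K * c / \<alpha>"
    using G1_int[OF c_nn] by auto
  have ai: "(\<lambda>r. (T s r ** P r) *v F r) absolutely_integrable_on {..s}"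
    by (rule measurable_bounded_by_integrable_imp_absolutely_integrable[OF meas _ G(1) dom]) auto
  then have i: "(\<lambda>r. (T s r ** P r) *v F r) integrable_on {..s}"
    using absolutely_integrable_on_def by blast
  have "norm (integral {..s} (\<lambda>r. (T s r ** P r) *v F r)) \<le> integral {..s} (G1 c s)"
    by (rule integral_norm_bound_integral[OF i G(1) dom])
  with G(2) i show ?thesis by linarith
qed

lemma k2_int_bound:
  "(\<lambda>r. (T s r ** (mat 1 - P r)) *v F r) integrable_on {s..} \<and> norm (integral {s..} (\<lambda>r. (T s r ** (mat 1 - P r)) *v F r)) \<le> K * c / \<alpha>"
proof -
  have dom: "norm ((T s r ** (mat 1 - P r)) *v F r) \<le> G2 c s r" if "r \<in> {s..}" for r
  proof -
    have "norm ((T s r ** (mat 1 - P r)) *v F r) \<le> opnorm (T s r ** (mat 1 - P r)) * norm (F r)" by (rule opnorm_mv)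
    also have "\<dots> \<le> (K * (\<mu> r / \<mu> s) powr (-\<alpha>)) * (c * (deriv \<mu> r / \<mu> r))"
      using dich_Q[of s r] that Fb[of r] using K_pos by (intro mult_mono opnorm_nn) auto
    also have "\<dots> = G2 c s r" unfolding G2_def ratio_exp by simp
    finally show ?thesis .
  qed
  have meas: "(\<lambda>r. (T s r ** (mat 1 - P r)) *v F r) \<in> borel_measurable (lebesgue_on {s..})"
    by (rule continuous_imp_measurable_on_sets_lebesgue[OF continuous_on_subset[OF k2_cont]]) auto
  have G: "G2 c s integrable_on {s..}" "integral {s..} (G2 c s) \<le> K * c / \<alpha>"
    using G2_int[OF c_nn] by auto
  have ai: "(\<lambda>r. (T s r ** (mat 1 - P r)) *v F r) absolutely_integrable_on {s..}"
    by (rule measurable_bounded_by_integrable_imp_absolutely_integrable[OF meas _ G(1) dom]) auto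
  then have i: "(\<lambda>r. (T s r ** (mat 1 - P r)) *v F r) integrable_on {s..}"
    using absolutely_integrable_on_def by blast
  have "norm (integral {s..} (\<lambda>r. (T s r ** (mat 1 - P r)) *v F r)) \<le> integral {s..} (G2 c s)"
    by (rule integral_norm_bound_integral[OF i G(1) dom])
  with G(2) i show ?thesis by linarith
qed

lemma Lop_bound: "norm (Lop F s) \<le> 2 * K * c / \<alpha>"
proof -
  have "norm (Lop F s) \<le> norm (integral {..s} (\<lambda>r. (T s r ** P r) *v F r))
          + norm (integral {s..} (\<lambda>r. (T s r ** (mat 1 - P r)) *v F r))"
    unfolding Lop_def by (rule norm_triangle_ineq4)
  also have "\<dots> \<le> K * c / \<alpha> + K * c / \<alpha>"
    using k1_int_bound k2_int_bound by (intro add_mono) auto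
  finally show ?thesis by simp
qed

definition "j1 r = (T 0 r ** P r) *v F r"
definition "j2 r = (T 0 r ** (mat 1 - P r)) *v F r"
definition "J1 s = integral {..s} j1"
definition "J2 s = integral {s..} j2"

lemma j1_cont: "continuous_on UNIV j1"
  unfolding j1_def by (rule k1_cont)

lemma j2_cont: "continuous_on UNIV j2"
  unfolding j2_def by (rule k2_cont)

lemma j1_int: "j1 integrable_on {..s}"
proof -
  have "((*v) (T 0 s) \<circ> (\<lambda>r. (T s r ** P r) *v F r)) integrable_on {..s}"
    using integrable_linear[OF conjunct1[OF k1_int_bound] matrix_vector_mul_bounded_linear] .
  moreover have "((*v) (T 0 s) \<circ> (\<lambda>r. (T s r ** P r) *v F r)) = j1"
    by (rule ext) (simp add: j1_def matrix_vector_mul_assoc matrix_mul_assoc cocycle)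
  ultimately show ?thesis by simp
qed

lemma j2_int: "j2 integrable_on {s..}"
proof -
  have "((*v) (T 0 s) \<circ> (\<lambda>r. (T s r ** (mat 1 - P r)) *v F r)) integrable_on {s..}"
    using integrable_linear[OF conjunct1[OF k2_int_bound] matrix_vector_mul_bounded_linear] .
  moreover have "((*v) (T 0 s) \<circ> (\<lambda>r. (T s r ** (mat 1 - P r)) *v F r)) = j2"
    by (rule ext) (simp add: j2_def matrix_vector_mul_assoc matrix_mul_assoc cocycle)
  ultimately show ?thesis by simp
qed

lemma Lop_eq: "Lop F s = T s 0 *v (J1 s - J2 s)"
proof -
  have e1: "(\<lambda>r. (T s r ** P r) *v F r) = ((*v) (T s 0) \<circ> j1)"
    by (rule ext) (simp add: j1_def matrix_vector_mul_assoc matrix_mul_assoc cocycle)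
  have e2: "(\<lambda>r. (T s r ** (mat 1 - P r)) *v F r) = ((*v) (T s 0) \<circ> j2)"
    by (rule ext) (simp add: j2_def matrix_vector_mul_assoc matrix_mul_assoc cocycle)
  show ?thesis
    unfolding Lop_def e1 e2 J1_def J2_def
    by (simp add: integral_linear[OF j1_int matrix_vector_mul_bounded_linear]
        integral_linear[OF j2_int matrix_vector_mul_bounded_linear] matrix_vector_mult_diff_distrib)
qed

lemma J1_split: assumes "a \<le> s" shows "J1 s = J1 a + integral {a..s} j1"
proof -
  have "(j1 has_integral (J1 a + integral {a..s} j1)) ({..a} \<union> {a..s})"
  proof (rule has_integral_Un)
    show "(j1 has_integral J1 a) {..a}" unfolding J1_def using j1_int by blast
    show "(j1 has_integral integral {a..s} j1) {a..s}"
      using integrable_continuous_real[OF continuous_on_subset[OF j1_cont]] by blast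
    have "{..a} \<inter> {a..s} = {a}" using assms by auto
    then show "negligible ({..a} \<inter> {a..s})" by simp
  qed
  moreover have "{..a} \<union> {a..s} = {..s}" using assms by auto
  ultimately show ?thesis unfolding J1_def by (simp add: integral_unique)
qed

lemma J2_split: assumes "a \<le> s" shows "J2 s = J2 a - integral {a..s} j2"
proof -
  have "(j2 has_integral (integral {a..s} j2 + J2 s)) ({a..s} \<union> {s..})"
  proof (rule has_integral_Un)
    show "(j2 has_integral J2 s) {s..}" unfolding J2_def using j2_int by blast
    show "(j2 has_integral integral {a..s} j2) {a..s}"
      using integrable_continuous_real[OF continuous_on_subset[OF j2_cont]] by blast
    have "{a..s} \<inter> {s..} = {s}" using assms by auto
    then show "negligible ({a..s} \<inter> {s..})" by simp
  qed
  moreover have "{a..s} \<union> {s..} = {a..}" using assms by auto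
  ultimately have "J2 a = integral {a..s} j2 + J2 s" unfolding J2_def by (simp add: integral_unique)
  then show ?thesis by simp
qed

lemma J1_deriv: "(J1 has_vector_derivative j1 s0) (at s0)"
proof -
  let ?a = "s0 - 1" and ?b = "s0 + 1"
  have "((\<lambda>u. integral {?a..u} j1) has_vector_derivative j1 s0) (at s0 within {?a..?b})"
    by (rule integral_has_vector_derivative[OF continuous_on_subset[OF j1_cont]]) auto
  then have h: "((\<lambda>u. integral {?a..u} j1) has_vector_derivative j1 s0) (at s0)"
    by (simp add: at_within_Icc_at)
  have "((\<lambda>u. J1 ?a + integral {?a..u} j1) has_vector_derivative j1 s0) (at s0)"
    using has_vector_derivative_add[OF has_vector_derivative_const h] by simp
  then show ?thesis
    by (rule has_vector_derivative_transform_within_open[where S="{?a<..}"]) (auto intro!: J1_split[symmetric])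
qed

lemma J2_deriv: "(J2 has_vector_derivative - j2 s0) (at s0)"
proof -
  let ?a = "s0 - 1" and ?b = "s0 + 1"
  have "((\<lambda>u. integral {?a..u} j2) has_vector_derivative j2 s0) (at s0 within {?a..?b})"
    by (rule integral_has_vector_derivative[OF continuous_on_subset[OF j2_cont]]) auto
  then have h: "((\<lambda>u. integral {?a..u} j2) has_vector_derivative j2 s0) (at s0)"
    by (simp add: at_within_Icc_at)
  have "((\<lambda>u. J2 ?a - integral {?a..u} j2) has_vector_derivative - j2 s0) (at s0)"
    using has_vector_derivative_diff[OF has_vector_derivative_const h] by simp
  then show ?thesis
    by (rule has_vector_derivative_transform_within_open[where S="{?a<..}"]) (auto intro!: J2_split[symmetric])
qed

lemma Lop_deriv: "(Lop F has_vector_derivative A s *v Lop F s + F s) (at s)"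
proof -
  have d: "((\<lambda>s. J1 s - J2 s) has_vector_derivative j1 s - - j2 s) (at s)"
    by (rule has_vector_derivative_diff[OF J1_deriv J2_deriv])
  have "((\<lambda>s. T s 0 *v (J1 s - J2 s)) has_vector_derivative
          T s 0 *v (j1 s - - j2 s) + (A s ** T s 0) *v (J1 s - J2 s)) (at s)"
    using bounded_bilinear.has_vector_derivative[OF bb_mv T_deriv[of 0 s] d] by simp
  moreover have "T s 0 *v (j1 s - - j2 s) = F s"
  proof -
    have "j1 s - - j2 s = (T 0 s ** P s + T 0 s ** (mat 1 - P s)) *v F s"
      unfolding j1_def j2_def by (simp add: matrix_vector_mult_add_rdistrib)
    also have "T 0 s ** P s + T 0 s ** (mat 1 - P s) = T 0 s"
      by (simp add: mm_diff_right)
    finally show ?thesis by (simp add: matrix_vector_mul_assoc T_inv)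
  qed
  moreover have "(A s ** T s 0) *v (J1 s - J2 s) = A s *v Lop F s"
    by (simp add: Lop_eq matrix_vector_mul_assoc)
  moreover have "Lop F = (\<lambda>s. T s 0 *v (J1 s - J2 s))"
    by (rule ext) (rule Lop_eq)
  ultimately show ?thesis by (simp add: add.commute)
qed

end

end



context setting begin

lemma Lop_bounded:
  assumes Fc: "continuous_on UNIV F" and Fb: "\<And>r. norm (F r) \<le> c * (deriv \<mu> r / \<mu> r)" and c: "c \<ge> 0"
  shows "bounded (range (Lop F))"
  unfolding bounded_iff using Lop_bound[OF Fc Fb c] by blast

lemma bsol_eq_Lop:
  assumes Fc: "continuous_on UNIV F" and Fb: "\<And>r. norm (F r) \<le> c * (deriv \<mu> r / \<mu> r)" and c: "c \<ge> 0"
    and bz: "bounded (range z)"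
    and dz: "\<And>s. (z has_vector_derivative A s *v z s + F s) (at s)"
  shows "z s = Lop F s"
proof -
  have "(\<lambda>s. z s - Lop F s) s = 0"
  proof (rule hom_bdd_zero)
    show "((\<lambda>s. z s - Lop F s) has_vector_derivative A s *v (z s - Lop F s)) (at s)" for s
      using has_vector_derivative_diff[OF dz[of s] Lop_deriv[OF Fc Fb c, of s]]
      by (simp add: matrix_vector_mult_diff_distrib)
    show "bounded (range (\<lambda>s. z s - Lop F s))"
      by (rule bounded_minus_comp[OF bz Lop_bounded[OF Fc Fb c]])
  qed
  then show ?thesis by simp
qed

lemma bsol_bound:
  assumes Fc: "continuous_on UNIV F" and Fb: "\<And>r. norm (F r) \<le> c * (deriv \<mu> r / \<mu> r)" and c: "c \<ge> 0"
    and bz: "bounded (range z)"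
    and dz: "\<And>s. (z has_vector_derivative A s *v z s + F s) (at s)"
  shows "norm (z s) \<le> 2 * K * c / \<alpha>"
  using bsol_eq_Lop[OF Fc Fb c bz dz] Lop_bound[OF Fc Fb c] by simp

lemma Y_cont: "continuous_on UNIV (\<lambda>s. Y s \<tau> y)"
  by (intro continuous_at_imp_continuous_on ballI has_vector_derivative_continuous[OF Y_sol])

definition "Fz \<tau> y w s = f s (Y s \<tau> y + w s)"

lemma Fz_cont:
  assumes "continuous_on UNIV w"
  shows "continuous_on UNIV (Fz \<tau> y w)"
proof -
  have c: "continuous_on UNIV (\<lambda>s. (s, Y s \<tau> y + w s))"
    by (intro continuous_on_Pair continuous_on_id continuous_on_add Y_cont assms)
  have "continuous_on UNIV ((\<lambda>(t, x). f t x) \<circ> (\<lambda>s. (s, Y s \<tau> y + w s)))"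
    by (rule continuous_on_compose[OF c continuous_on_subset[OF f_cont]]) simp
  then show ?thesis by (simp add: Fz_def o_def)
qed

lemma Fz_bd: "norm (Fz \<tau> y w r) \<le> \<beta> * (deriv \<mu> r / \<mu> r)"
  unfolding Fz_def using f_bdd by simp

lemma Fz_diff_bd:
  assumes "\<And>s. norm (w1 s - w2 s) \<le> D"
  shows "norm (Fz \<tau> y w1 r - Fz \<tau> y w2 r) \<le> (\<gamma> * D) * (deriv \<mu> r / \<mu> r)"
proof -
  have "norm (Fz \<tau> y w1 r - Fz \<tau> y w2 r) \<le> \<gamma> * deriv \<mu> r / \<mu> r * norm (w1 r - w2 r)"
    unfolding Fz_def using f_lip[of r "Y r \<tau> y + w1 r" "Y r \<tau> y + w2 r"] by simp
  also have "\<dots> \<le> \<gamma> * deriv \<mu> r / \<mu> r * D"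
    using assms[of r] mult_nonneg_nonneg[OF gamma_nn dLam_nn[of r]] by (intro mult_left_mono) auto
  finally show ?thesis by (simp add: algebra_simps)
qed

definition "Phi \<tau> y (w :: real \<Rightarrow>\<^sub>C (real^'n)) = Bcontfun (Lop (Fz \<tau> y (apply_bcontfun w)))"

lemma Lop_Fz_bcontfun:
  assumes "continuous_on UNIV w"
  shows "Lop (Fz \<tau> y w) \<in> bcontfun"
proof -
  have "continuous_on UNIV (Lop (Fz \<tau> y w))"
    by (intro continuous_at_imp_continuous_on ballI has_vector_derivative_continuous[OF Lop_deriv[OF Fz_cont[OF assms] Fz_bd beta_nn]])
  then show ?thesis
    using Lop_bounded[OF Fz_cont[OF assms] Fz_bd beta_nn] by (simp add: bcontfun_def)
qed

lemma Phi_apply: "apply_bcontfun (Phi \<tau> y w) = Lop (Fz \<tau> y (apply_bcontfun w))"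
  unfolding Phi_def using Lop_Fz_bcontfun[of "apply_bcontfun w"]
  by (simp add: Bcontfun_inverse)

lemma Phi_contr: "dist (Phi \<tau> y w1) (Phi \<tau> y w2) \<le> (2 * K * \<gamma> / \<alpha>) * dist w1 w2"
proof (rule dist_bound)
  fix s
  let ?D = "dist w1 w2"
  let ?F1 = "Fz \<tau> y (apply_bcontfun w1)" and ?F2 = "Fz \<tau> y (apply_bcontfun w2)"
  have c1: "continuous_on UNIV ?F1" "continuous_on UNIV ?F2" by (auto intro!: Fz_cont)
  have Dnn: "0 \<le> \<gamma> * ?D" using gamma_nn by simp
  have "norm ((\<lambda>s. Lop ?F1 s - Lop ?F2 s) s) \<le> 2 * K * (\<gamma> * ?D) / \<alpha>"
  proof (rule bsol_bound[where F="\<lambda>s. ?F1 s - ?F2 s"])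
    show "continuous_on UNIV (\<lambda>s. ?F1 s - ?F2 s)" using c1 by (intro continuous_intros)
    show "norm (?F1 r - ?F2 r) \<le> (\<gamma> * ?D) * (deriv \<mu> r / \<mu> r)" for r
      by (rule Fz_diff_bd) (metis dist_bounded dist_norm)
    show "0 \<le> \<gamma> * ?D" by (rule Dnn)
    show "bounded (range (\<lambda>s. Lop ?F1 s - Lop ?F2 s))"
      by (intro bounded_minus_comp Lop_bounded[OF _ Fz_bd beta_nn] c1)
    show "((\<lambda>s. Lop ?F1 s - Lop ?F2 s) has_vector_derivative
            A s *v (Lop ?F1 s - Lop ?F2 s) + (?F1 s - ?F2 s)) (at s)" for s
      using has_vector_derivative_diff[OF Lop_deriv[OF c1(1) Fz_bd beta_nn, of s] Lop_deriv[OF c1(2) Fz_bd beta_nn, of s]]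
      by (simp add: matrix_vector_mult_diff_distrib algebra_simps)
  qed
  then show "dist (apply_bcontfun (Phi \<tau> y w1) s) (apply_bcontfun (Phi \<tau> y w2) s) \<le> (2 * K * \<gamma> / \<alpha>) * ?D"
    by (simp add: Phi_apply dist_norm)
qed

lemma contr_const: "0 \<le> 2 * K * \<gamma> / \<alpha>" "2 * K * \<gamma> / \<alpha> < 1"
proof -
  show "0 \<le> 2 * K * \<gamma> / \<alpha>" using K_pos gamma_nn alpha_pos by simp
  have "2 * K * \<gamma> / \<alpha> \<le> 6 * K * \<gamma> / \<alpha>"
    using K_pos gamma_nn alpha_pos by (intro divide_right_mono) auto
  then show "2 * K * \<gamma> / \<alpha> < 1" using small by linarith
qed

end


context setting begin
lemma g_ex1: "\<exists>!z. bounded (range z) \<and>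
   (\<forall>s. (z has_vector_derivative (A s *v z s + f s (Y s \<tau> y + z s))) (at s))"
proof -
  obtain w where w: "Phi \<tau> y w = w" and wu: "\<And>w'. Phi \<tau> y w' = w' \<Longrightarrow> w' = w"
  proof -
    have "\<exists>!w. Phi \<tau> y w = w"
      by (rule banach_fix_type[OF contr_const]) (use Phi_contr in blast)
    then show ?thesis using that by blast
  qed
  have zeq: "apply_bcontfun w = Lop (Fz \<tau> y (apply_bcontfun w))"
    using arg_cong[OF w, of apply_bcontfun] by (simp add: Phi_apply)
  show ?thesis
  proof (rule ex1I[where a="apply_bcontfun w"], intro conjI allI)
    show "bounded (range (apply_bcontfun w))"
      using apply_bcontfun[of w] by (simp add: bcontfun_def)
    fix s
    have "(Lop (Fz \<tau> y (apply_bcontfun w)) has_vector_derivative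
            A s *v Lop (Fz \<tau> y (apply_bcontfun w)) s + Fz \<tau> y (apply_bcontfun w) s) (at s)"
      by (rule Lop_deriv[OF Fz_cont Fz_bd beta_nn]) simp
    then show "(apply_bcontfun w has_vector_derivative A s *v apply_bcontfun w s + f s (Y s \<tau> y + apply_bcontfun w s)) (at s)"
      using zeq[symmetric] by (simp only: Fz_def)
  next
    fix z
    assume z: "bounded (range z) \<and> (\<forall>s. (z has_vector_derivative A s *v z s + f s (Y s \<tau> y + z s)) (at s))"
    have zc: "continuous_on UNIV z"
      using z by (intro continuous_at_imp_continuous_on ballI has_vector_derivative_continuous) blast
    have zb: "z \<in> bcontfun" using z zc by (simp add: bcontfun_def)
    have zb': "bounded (range z)" using z by blast
    have zd: "(z has_vector_derivative A s *v z s + Fz \<tau> y z s) (at s)" for s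
      using z unfolding Fz_def by blast
    have "z s = Lop (Fz \<tau> y z) s" for s
      using bsol_eq_Lop[OF Fz_cont[OF zc] Fz_bd beta_nn zb' zd] by blast
    then have "Lop (Fz \<tau> y z) = z" by auto
    then have "Phi \<tau> y (Bcontfun z) = Bcontfun z"
      unfolding Phi_def using zb by (simp add: Bcontfun_inverse)
    then have "Bcontfun z = w" by (rule wu)
    then show "z = apply_bcontfun w" using zb by (auto simp: Bcontfun_inverse)
  qed
qed

end



lemma mv_neg: "(M::real^'n^'m) *v (- v) = - (M *v v)"
  using linear_neg[OF matrix_vector_mul_linear] by blast

context setting begin

lemma main: "Hmap A f X t (Gmap A f Y t y) = y"
proof -
  define Pg where "Pg = (\<lambda>z. bounded (range z) \<and>
     (\<forall>s. (z has_vector_derivative (A s *v z s + f s (Y s t y + z s))) (at s)))"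
  have ex1: "\<exists>!z. Pg z" unfolding Pg_def by (rule g_ex1)
  define z where "z = (THE z. Pg z)"
  have Pz: "Pg z" unfolding z_def by (rule theI'[OF ex1])
  have zb: "bounded (range z)" and dz: "\<And>s. (z has_vector_derivative (A s *v z s + f s (Y s t y + z s))) (at s)"
    using Pz unfolding Pg_def by auto
  have G: "Gmap A f Y t y = y + z t"
    unfolding Gmap_def gsol_def z_def Pg_def by simp
  define x where "x = y + z t"
  define w where "w = (\<lambda>s. Y s t y + z s)"
  have dw: "(w has_vector_derivative A s *v w s + f s (w s)) (at s)" for s
    unfolding w_def using has_vector_derivative_add[OF Y_sol[where t=s and \<tau>=t and \<xi>=y] dz[of s]]
    by (simp add: matrix_vector_right_distrib algebra_simps)
  obtain MA where MA: "MA \<ge> 0" "\<And>s v. norm (A s *v v) \<le> MA * norm v" using A_vbound by blast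
  have Xw: "X s t x = w s" for s
  proof (rule ivp_unique[where u="\<lambda>s. X s t x" and v=w and u'="\<lambda>s. A s *v X s t x + f s (X s t x)"
        and v'="\<lambda>s. A s *v w s + f s (w s)" and M=MA and c=\<gamma> and \<mu>=\<mu> and tz=t])
    show "((\<lambda>s. X s t x) has_vector_derivative A s *v X s t x + f s (X s t x)) (at s)" for s
      by (rule X_sol)
    show "(w has_vector_derivative A s *v w s + f s (w s)) (at s)" for s by (rule dw)
    show "norm (A s *v X s t x + f s (X s t x) - (A s *v w s + f s (w s)))
          \<le> (MA + \<gamma> * deriv \<mu> s / \<mu> s) * norm (X s t x - w s)" for s
    proof -
      have "norm (A s *v X s t x + f s (X s t x) - (A s *v w s + f s (w s)))
            \<le> norm (A s *v (X s t x - w s)) + norm (f s (X s t x) - f s (w s))"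
        by (rule order_trans[OF _ norm_triangle_ineq]) (simp add: matrix_vector_mult_diff_distrib algebra_simps)
      also have "\<dots> \<le> MA * norm (X s t x - w s) + \<gamma> * deriv \<mu> s / \<mu> s * norm (X s t x - w s)"
        by (intro add_mono MA(2) f_lip)
      finally show ?thesis by (simp add: algebra_simps)
    qed
    show "X t t x = w t" unfolding w_def x_def by (simp add: X_init Y_init)
  qed (auto simp: mu_pos dmu dmu_nn MA gamma_nn)
  define Ph where "Ph = (\<lambda>h. bounded (range h) \<and>
     (\<forall>s. (h has_vector_derivative (A s *v h s - f s (X s (fst (t, x)) (snd (t, x))))) (at s)))"
  have "(THE h. Ph h) = (\<lambda>s. - z s)"
  proof (rule the_equality)
    have "((\<lambda>s. - z s) has_vector_derivative (A s *v (- z s) - f s (X s t x))) (at s)" for s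
      using has_vector_derivative_minus[OF dz[of s]] Xw[of s]
      by (simp add: w_def mv_neg algebra_simps)
    then show "Ph (\<lambda>s. - z s)" unfolding Ph_def using zb by simp
  next
    fix h assume "Ph h"
    then have hb: "bounded (range h)" and dh: "\<And>s. (h has_vector_derivative (A s *v h s - f s (X s t x))) (at s)"
      unfolding Ph_def by auto
    have "(\<lambda>s. h s + z s) s = 0" for s
    proof (rule hom_bdd_zero)
      show "((\<lambda>s. h s + z s) has_vector_derivative A s *v (h s + z s)) (at s)" for s
        using has_vector_derivative_add[OF dh[of s] dz[of s]] Xw[of s]
        by (simp add: w_def matrix_vector_right_distrib algebra_simps)
      show "bounded (range (\<lambda>s. h s + z s))" by (rule bounded_plus_comp[OF hb zb])
    qed
    then show "h = (\<lambda>s. - z s)" by (auto simp: eq_neg_iff_add_eq_0)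
  qed
  then have "hsol A f X t (t, x) = - z t"
    unfolding hsol_def Ph_def by simp
  then show ?thesis unfolding Hmap_def G x_def[symmetric] by (simp add: x_def)
qed

end


theorem lemma3p7:
  fixes A :: "real \<Rightarrow> real^'n^'n"
    and T :: "real \<Rightarrow> real \<Rightarrow> real^'n^'n"
    and \<mu> :: "real \<Rightarrow> real"
    and P :: "real \<Rightarrow> real^'n^'n"
    and K \<alpha> \<beta> \<gamma> :: real
    and f :: "real \<Rightarrow> real^'n \<Rightarrow> real^'n"
    and X Y :: "real \<Rightarrow> real \<Rightarrow> real^'n \<Rightarrow> real^'n"
  assumes A_cont: "continuous_on UNIV A"
    and A_bdd: "bounded (range A)"
    and T_init: "\<And>s. T s s = mat 1"
    and T_deriv: "\<And>t s. ((\<lambda>r. T r s) has_vector_derivative (A t ** T t s)) (at t)"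
    and mu_pos: "\<And>t. \<mu> t > 0"
    and mu_incr: "strict_mono \<mu>"
    and mu_diff: "\<And>t. \<mu> differentiable (at t)"
    and mu_0: "\<mu> 0 = 1"
    and mu_bot: "(\<mu> \<longlongrightarrow> 0) at_bot"
    and mu_top: "filterlim \<mu> at_top at_top"
    and P_proj: "\<And>s. P s ** P s = P s"
    and K_pos: "K > 0" and alpha_pos: "\<alpha> > 0"
    and dich_comm: "\<And>t s. T t s ** P s = P t ** T t s"
    and dich_P: "\<And>t s. t \<ge> s \<Longrightarrow> opnorm (T t s ** P s) \<le> K * (\<mu> t / \<mu> s) powr (-\<alpha>)"
    and dich_Q: "\<And>t s. t \<le> s \<Longrightarrow> opnorm (T t s ** (mat 1 - P s)) \<le> K * (\<mu> s / \<mu> t) powr (-\<alpha>)"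
    and f_cont: "continuous_on UNIV (\<lambda>(t, x). f t x)"
    and f_bdd: "\<And>t x. norm (f t x) \<le> \<beta> * deriv \<mu> t / \<mu> t"
    and f_lip: "\<And>t x1 x2. norm (f t x1 - f t x2) \<le> \<gamma> * deriv \<mu> t / \<mu> t * norm (x1 - x2)"
    and beta_nn: "\<beta> \<ge> 0" and gamma_nn: "\<gamma> \<ge> 0"
    and small: "6 * K * \<gamma> / \<alpha> < 1"
    and X_init: "\<And>\<tau> \<xi>. X \<tau> \<tau> \<xi> = \<xi>"
    and X_sol: "\<And>t \<tau> \<xi>. ((\<lambda>r. X r \<tau> \<xi>) has_vector_derivative
                    (A t *v X t \<tau> \<xi> + f t (X t \<tau> \<xi>))) (at t)"
    and Y_init: "\<And>\<tau> \<xi>. Y \<tau> \<tau> \<xi> = \<xi>"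
    and Y_sol: "\<And>t \<tau> \<xi>. ((\<lambda>r. Y r \<tau> \<xi>) has_vector_derivative (A t *v Y t \<tau> \<xi>)) (at t)"
  shows "\<forall>t y. Hmap A f X t (Gmap A f Y t y) = y"
proof -
  interpret setting A T \<mu> P K \<alpha> \<beta> \<gamma> f X Y
    by unfold_locales (fact assms)+
  show ?thesis using main by blast
qed

end
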